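(* Let $N\ge 2$, $d\ge1$, and let $\tilde\psi:\mathbb{R}\to\mathbb{R}$ be a positive, bounded, continuous function with $\tilde K:=\|\tilde\psi\|_\infty$. Let $\{t_n\}_{n\in\mathbb{N}_0}$ be an increasing sequence of nonnegative numbers with $t_0=0$, $t_n\to\infty$, and define $\alpha:[0,\infty)\to\{-1,1\}$ by $\alpha(0)=1$, $\alpha(t)=1$ on $(t_{2n},t_{2n+1})$, $\alpha(t)=-1$ on $[t_{2n+1},t_{2n+2}]$, $n\in\mathbb{N}_0$. Assume $t_{2n+2}-t_{2n+1}<\frac{\ln 2}{\tilde K}$ for all $n\in\mathbb{N}_0$, $$\sum_{p=0}^{\infty}\ln\left(\frac{e^{\tilde K(t_{2p+2}-t_{2p+1})}}{2-e^{\tilde K(t_{2p+2}-t_{2p+1})}}\right)<+\infty,$$ $$\sum_{p=0}^{\infty}\ln\left(\max\left\{1-e^{-\tilde K(t_{2p+1}-t_{2p})},\,1-\frac{\tilde\psi_0}{\tilde K}\big(1-e^{-\tilde K(t_{2p+1}-t_{2p})}\big)\right\}\right)=-\infty,$$ where $\tilde\psi_0:=\min_{|y|\le \tilde M^0}\tilde\psi(y)$ and $$\tilde M^0:=e^{\sum_{p=0}^{\infty}\ln\left(\frac{e^{\tilde K(t_{2p+2}-t_{2p+1})}}{2-e^{\tilde K(t_{2p+2}-t_{2p+1})}}\right)}d(0),\qquad d(0)=\max_{i,j}|x_i^0-x_j^0|.$$ Then every solution $\{x_i\}_{i=1,\dots,N}$ of $$\frac{d}{dt}x_i(t)=\frac{1}{N-1}\sum_{j\ne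 i}\alpha(t)\,\tilde\psi(|x_i(t)-x_j(t)|)\,(x_j(t)-x_i(t)),\quad t>0,\qquad x_i(0)=x_i^0\in\mathbb{R}^d,$$ converges to consensus, i.e. $\lim_{t\to\infty}\max_{i,j}|x_i(t)-x_j(t)|=0$.
   Context: $\mathbb{N}_0=\{0,1,2,\dots\}$. A solution is a continuous function that is $C^1$ on each interval $(t_n,t_{n+1})$ and satisfies the equation there. *)

theory Defs
  imports "HOL-Analysis.Analysis"
begin

definition switch_alpha :: "(nat \<Rightarrow> real) \<Rightarrow> real \<Rightarrow> real" where
  "switch_alpha t s =
     (if s = 0 then 1
      else if (\<exists>n. t (2*n+1) \<le> s \<and> s \<le> t (2*n+2)) then -1 else 1)"

definition diam_conf :: "nat \<Rightarrow> (nat \<Rightarrow> real \<Rightarrow> 'a::real_normed_vector) \<Rightarrow> real \<Rightarrow> real" where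
  "diam_conf N x s = Max {norm (x i s - x j s) | i j. i < N \<and> j < N}"

definition cons_rhs :: "nat \<Rightarrow> (nat \<Rightarrow> real) \<Rightarrow> (real \<Rightarrow> real) \<Rightarrow> (nat \<Rightarrow> real \<Rightarrow> 'a::real_normed_vector)
    \<Rightarrow> nat \<Rightarrow> real \<Rightarrow> 'a" where
  "cons_rhs N t \<psi> x i s =
     (1 / (real N - 1)) *\<^sub>R
       (\<Sum>j\<in>{..<N} - {i}. (switch_alpha t s * \<psi> (norm (x i s - x j s))) *\<^sub>R (x j s - x i s))"

definition is_solution :: "nat \<Rightarrow> (nat \<Rightarrow> real) \<Rightarrow> (real \<Rightarrow> real) \<Rightarrow> (nat \<Rightarrow> real \<Rightarrow> 'a::real_normed_vector) \<Rightarrow> bool" where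
  "is_solution N t \<psi> x \<longleftrightarrow>
     (\<forall>i<N. continuous_on {0..} (x i) \<and>
        (\<forall>n. (\<forall>s\<in>{t n<..<t (Suc n)}. (x i has_vector_derivative cons_rhs N t \<psi> x i s) (at s)) \<and>
             continuous_on {t n<..<t (Suc n)} (\<lambda>s. vector_derivative (x i) (at s))))"

end

theory Submission
  imports Defs "HOL-Analysis.Analysis"
begin

lemma inner_self_deriv:
  assumes "(f has_vector_derivative f') (at s)"
  shows "((\<lambda>s. inner (f s) (f s)) has_real_derivative 2 * inner (f s) f') (at s)"
proof -
  have "((\<lambda>s. inner (f s) (f s)) has_derivative (\<lambda>h. inner (f s) (h *\<^sub>R f') + inner (h *\<^sub>R f') (f s))) (at s)"
    using assms unfolding has_vector_derivative_def by (intro has_derivative_inner)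
  then show ?thesis unfolding has_field_derivative_def
    by (rule has_derivative_eq_rhs) (auto simp: inner_commute algebra_simps)
qed

lemma continuous_on_Max_fin:
  fixes f :: "'p \<Rightarrow> real \<Rightarrow> real"
  assumes "finite P" "P \<noteq> {}" "\<forall>p\<in>P. continuous_on S (f p)"
  shows "continuous_on S (\<lambda>u. Max ((\<lambda>q. f q u) ` P))"
  using assms
proof (induction P rule: finite_ne_induct)
  case (singleton x) then show ?case by simp
next
  case (insert x F)
  have "(\<lambda>u. Max ((\<lambda>q. f q u) ` insert x F)) = (\<lambda>u. max (f x u) (Max ((\<lambda>q. f q u) ` F)))"
    using insert by auto
  then show ?case using insert by (auto intro!: continuous_on_max)
qed

lemma Max_affine:
  fixes h :: "'p \<Rightarrow> real"
  assumes "finite P" "P \<noteq> {}" "\<alpha> > 0"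
  shows "Max ((\<lambda>q. \<alpha> * h q + \<beta>) ` P) = \<alpha> * Max (h ` P) + \<beta>"
proof -
  have m: "mono (\<lambda>y. \<alpha> * y + \<beta>)" using assms(3) by (auto simp: mono_def)
  have "(\<lambda>y. \<alpha> * y + \<beta>) (Max (h ` P)) = Max ((\<lambda>y. \<alpha> * y + \<beta>) ` (h ` P))"
    by (rule mono_Max_commute[OF m]) (use assms in auto)
  then show ?thesis by (simp add: image_image)
qed

lemma right_noninc_aux:
  fixes g :: "real \<Rightarrow> real"
  assumes "a < a'" "a' \<le> b" "continuous_on {a..b} g"
    and loc: "\<And>u. a < u \<Longrightarrow> u < b \<Longrightarrow> eventually (\<lambda>v. g v \<le> g u) (at_right u)"
  shows "g b \<le> g a'"
proof -
  define S where "S = {s \<in> {a'..b}. \<forall>u\<in>{a'..s}. g u \<le> g a'}"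
  define \<sigma> where "\<sigma> = Sup S"
  have aS: "a' \<in> S" unfolding S_def using assms by auto
  have bdd: "bdd_above S" unfolding S_def by (auto intro: bdd_aboveI[of _ b])
  have sig1: "a' \<le> \<sigma>" unfolding \<sigma>_def using aS bdd by (rule cSup_upper)
  have sig2: "\<sigma> \<le> b" unfolding \<sigma>_def using aS by (intro cSup_least) (auto simp: S_def)
  have below: "g u \<le> g a'" if "a' \<le> u" "u < \<sigma>" for u
  proof -
    obtain s where "s \<in> S" "u < s" using less_cSupD[of S u] aS \<open>u < \<sigma>\<close> unfolding \<sigma>_def by auto
    then show ?thesis unfolding S_def using that by auto
  qed
  have gs: "g \<sigma> \<le> g a'"
  proof (cases "\<sigma> = a'")
    case True then show ?thesis by simp
  next
    case False
    then have "a' < \<sigma>" using sig1 by simp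
    have "continuous_on {a'..\<sigma>} g" using assms sig2 by (auto intro: continuous_on_subset)
    then have lim: "(g \<longlongrightarrow> g \<sigma>) (at_left \<sigma>)" using \<open>a' < \<sigma>\<close> by (rule continuous_on_Icc_at_leftD)
    have ev: "eventually (\<lambda>u. g u \<le> g a') (at_left \<sigma>)"
      unfolding eventually_at_left_field using \<open>a' < \<sigma>\<close> below by (auto intro!: exI[of _ a'])
    show ?thesis by (rule tendsto_upperbound[OF lim ev]) simp
  qed
  have sS: "\<sigma> \<in> S"
  proof -
    have "\<forall>u\<in>{a'..\<sigma>}. g u \<le> g a'"
    proof
      fix u assume "u \<in> {a'..\<sigma>}"
      then show "g u \<le> g a'" using below[of u] gs by (cases "u = \<sigma>") auto
    qed
    then show ?thesis unfolding S_def using sig1 sig2 by auto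
  qed
  show ?thesis
  proof (cases "\<sigma> = b")
    case True then show ?thesis using gs by simp
  next
    case False
    then have "\<sigma> < b" using sig2 by simp
    then have "eventually (\<lambda>v. g v \<le> g \<sigma>) (at_right \<sigma>)" using loc assms sig1 by auto
    then obtain e where e: "e > \<sigma>" "\<And>y. y > \<sigma> \<Longrightarrow> y < e \<Longrightarrow> g y \<le> g \<sigma>"
      unfolding eventually_at_right_field by auto
    define w where "w = min ((\<sigma> + e)/2) b"
    have w: "\<sigma> < w" "w \<le> b" "w < e" using e \<open>\<sigma> < b\<close> unfolding w_def by (auto simp: min_def)
    have "w \<in> S" unfolding S_def
    proof (safe)
      show "w \<in> {a'..b}" using w sig1 by auto
      fix u assume "u \<in> {a'..w}"
      then consider "u \<le> \<sigma>" | "\<sigma> < u" "u \<le> w" by force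
      then show "g u \<le> g a'"
      proof cases
        case 1 then show ?thesis using sS \<open>u \<in> {a'..w}\<close> unfolding S_def by auto
      next
        case 2 then show ?thesis using e(2)[of u] w gs by auto
      qed
    qed
    then have "w \<le> \<sigma>" unfolding \<sigma>_def using bdd by (rule cSup_upper)
    then show ?thesis using w by simp
  qed
qed

lemma right_noninc:
  fixes g :: "real \<Rightarrow> real"
  assumes "a < b" "continuous_on {a..b} g"
    and loc: "\<And>u. a < u \<Longrightarrow> u < b \<Longrightarrow> eventually (\<lambda>v. g v \<le> g u) (at_right u)"
  shows "g b \<le> g a"
proof -
  have lim: "(g \<longlongrightarrow> g a) (at_right a)" using assms by (intro continuous_on_Icc_at_rightD)
  have ev: "eventually (\<lambda>a'. g b \<le> g a') (at_right a)"
    unfolding eventually_at_right_field using assms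
    by (auto intro!: exI[of _ b] right_noninc_aux[OF _ _ assms(2) loc])
  show ?thesis by (rule tendsto_lowerbound[OF lim ev]) simp
qed

lemma maxgrowth:
  fixes f f' :: "'p \<Rightarrow> real \<Rightarrow> real"
  assumes fin: "finite P" "P \<noteq> {}" and ab: "a \<le> s" "s \<le> b"
    and cont: "\<forall>p\<in>P. continuous_on {a..b} (f p)"
    and der: "\<forall>p\<in>P. \<forall>u\<in>{a<..<b}. (f p has_real_derivative f' p u) (at u)"
    and mx: "\<forall>u\<in>{a<..<b}. \<forall>p\<in>P. f p u = Max ((\<lambda>q. f q u) ` P) \<longrightarrow> f' p u \<le> c * f p u"
  shows "Max ((\<lambda>q. f q s) ` P) \<le> exp (c*(s-a)) * Max ((\<lambda>q. f q a) ` P)"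
proof (cases "s = a")
  case True then show ?thesis by simp
next
  case False
  then have as: "a < s" using ab by simp
  define M where "M u = Max ((\<lambda>q. f q u) ` P)" for u
  have key: "exp (- c * (s - a)) * M s - ee * s \<le> M a - ee * a" if "ee > 0" for ee
  proof -
    define G where "G q u = exp (-c*(u-a)) * f q u - ee*u" for q u
    define g where "g u = Max ((\<lambda>q. G q u) ` P)" for u
    have g_eq: "g u = exp (-c*(u-a)) * M u + (- ee*u)" for u
      unfolding g_def G_def M_def using Max_affine[OF fin, of "exp (-c*(u-a))" "\<lambda>q. f q u" "- ee*u"]
      by simp
    have contG: "continuous_on {a..s} (G q)" if "q \<in> P" for q
    proof -
      have "continuous_on {a..s} (f q)" using cont that ab by (auto intro: continuous_on_subset)
      then show ?thesis unfolding G_def by (intro continuous_intros)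
    qed
    have contg: "continuous_on {a..s} g" unfolding g_def
      by (rule continuous_on_Max_fin[OF fin]) (use contG in auto)
    have loc: "eventually (\<lambda>v. g v \<le> g u) (at_right u)" if u: "a < u" "u < s" for u
    proof -
      have "eventually (\<lambda>v. G q v < g u) (at_right u)" if q: "q \<in> P" for q
      proof -
        have uab: "u \<in> {a<..<b}" using u ab by auto
        have dG: "(G q has_real_derivative (exp (-c*(u-a)) * (f' q u - c * f q u) - ee)) (at u)"
          unfolding G_def using der q uab
          by (auto intro!: derivative_eq_intros simp: algebra_simps)
        show ?thesis
        proof (cases "f q u = M u")
          case True
          then have "f' q u \<le> c * f q u" using mx uab q unfolding M_def by auto
          then have neg: "exp (-c*(u-a)) * (f' q u - c * f q u) - ee < 0"
          proof -
            have "exp (-c*(u-a)) * (f' q u - c * f q u) \<le> 0"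
              by (rule mult_nonneg_nonpos) (use \<open>f' q u \<le> c * f q u\<close> in auto)
            then show ?thesis using \<open>ee > 0\<close> by linarith
          qed
          obtain d where d: "d > 0" "\<And>h. h > 0 \<Longrightarrow> h < d \<Longrightarrow> G q u > G q (u+h)"
            using DERIV_neg_dec_right[OF dG neg] by auto
          have Gu: "G q u = g u" unfolding g_eq G_def using True by simp
          show ?thesis unfolding eventually_at_right_field
          proof (intro exI[of _ "u+d"] conjI allI impI)
            show "u < u + d" using d by simp
            fix y assume "u < y" "y < u + d"
            then show "G q y < g u" using d(2)[of "y-u"] Gu by auto
          qed
        next
          case False
          have "f q u \<le> M u" using fin q unfolding M_def by auto
          with False have "f q u < M u" by simp
          then have lt: "G q u < g u" unfolding g_eq G_def by simp
          have "isCont (G q) u" using dG by (rule DERIV_isCont)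
          then have "(G q \<longlongrightarrow> G q u) (at_right u)" unfolding isCont_def
            by (rule tendsto_mono[rotated]) (simp add: at_le)
          then show ?thesis using lt by (rule order_tendstoD(2))
        qed
      qed
      then have "eventually (\<lambda>v. \<forall>q\<in>P. G q v < g u) (at_right u)"
        using fin(1) by (simp add: eventually_ball_finite)
      then show ?thesis
      proof (rule eventually_mono)
        fix v assume h: "\<forall>q\<in>P. G q v < g u"
        have "Max ((\<lambda>q. G q v) ` P) \<le> g u"
          using fin h by (subst Max_le_iff) (auto intro: less_imp_le)
        then show "g v \<le> g u" by (simp only: g_def)
      qed
    qed
    have "g s \<le> g a" by (rule right_noninc[OF as contg loc])
    then show ?thesis unfolding g_eq by simp
  qed
  have "exp (-c*(s-a)) * M s \<le> M a + e" if "e > 0" for e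
  proof -
    have "exp (- c * (s - a)) * M s - (e/(s-a)) * s \<le> M a - (e/(s-a)) * a"
      by (rule key) (use that as in simp)
    moreover have "(e/(s-a)) * s - (e/(s-a)) * a = (e/(s-a)) * (s - a)" by (simp only: right_diff_distrib)
    moreover have "(e/(s-a)) * (s - a) = e" using as by simp
    ultimately show ?thesis by linarith
  qed
  then have le: "exp (-c*(s-a)) * M s \<le> M a" by (rule field_le_epsilon)
  have "M s = (exp (c*(s-a)) * exp (-c*(s-a))) * M s"
    using exp_minus_inverse[of "c*(s-a)"] by simp
  also have "\<dots> = exp (c*(s-a)) * (exp (-c*(s-a)) * M s)" by (simp only: mult.assoc)
  also have "\<dots> \<le> exp (c*(s-a)) * M a" by (rule mult_left_mono[OF le]) simp
  finally show ?thesis by (simp only: M_def)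
qed

lemma pair_ineq:
  fixes X :: "nat \<Rightarrow> 'a::real_inner" and w :: "nat \<Rightarrow> nat \<Rightarrow> real"
  assumes N2: "N \<ge> 2" and ik: "i < N" "k < N"
    and maxp: "\<forall>j<N. \<forall>l<N. norm (X j - X l) \<le> norm (X i - X k)"
    and wlo: "\<forall>j<N. \<forall>l<N. lo \<le> w j l" and whi: "\<forall>j<N. \<forall>l<N. w j l \<le> K" and lo0: "0 \<le> lo"
    and R_def: "\<And>i' \<sigma>. R i' \<sigma> = (1/(real N - 1)) *\<^sub>R (\<Sum>j\<in>{..<N}-{i'}. (\<sigma> * w i' j) *\<^sub>R (X j - X i'))"
  shows "inner (X i - X k) (R i 1 - R k 1) \<le> -lo * norm (X i - X k)^2"
    and "inner (X i - X k) (R i (-1) - R k (-1)) \<le> 2*K * norm (X i - X k)^2"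
proof -
  define u where "u = X i - X k"
  define n2 where "n2 = norm u ^ 2"
  define A where "A j = inner u (X j - X i)" for j
  define B where "B j = inner u (X j - X k)" for j
  have n2i: "n2 = inner u u" unfolding n2_def by (simp add: power2_norm_eq_inner)
  have n20: "0 \<le> n2" unfolding n2_def by simp
  have BA: "B j = A j + n2" for j
  proof -
    have "X j - X k = (X j - X i) + u" unfolding u_def by simp
    then have "B j = inner u ((X j - X i) + u)" unfolding B_def by (simp only:)
    then show ?thesis unfolding A_def n2i by (simp only: inner_add_right)
  qed
  have Bhi: "B j \<le> n2" if "j < N" for j
  proof -
    have "B j \<le> norm u * norm (X j - X k)" unfolding B_def by (rule norm_cauchy_schwarz)
    also have "\<dots> \<le> norm u * norm u" using maxp that ik unfolding u_def by (auto intro: mult_left_mono)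
    finally show ?thesis unfolding n2_def by (simp add: power2_eq_square)
  qed
  have Alo: "- n2 \<le> A j" if "j < N" for j
  proof -
    have "- A j \<le> norm u * norm (X j - X i)"
      unfolding A_def using norm_cauchy_schwarz[of u "-(X j - X i)"] by (simp only: inner_minus_right norm_minus_cancel)
    also have "\<dots> \<le> norm u * norm u"
      using maxp that ik unfolding u_def by (auto intro!: mult_left_mono simp: norm_minus_commute)
    finally show ?thesis unfolding n2_def by (simp add: power2_eq_square)
  qed
  have Ahi: "A j \<le> 0" if "j < N" for j using Bhi[OF that] BA[of j] by simp
  have Blo: "0 \<le> B j" if "j < N" for j using Alo[OF that] BA[of j] by simp
  have Ai: "A i = 0" unfolding A_def by simp
  have Bk: "B k = 0" unfolding B_def by simp
  have Ri: "inner u (R i \<sigma>) = (1/(real N - 1)) * (\<Sum>j\<in>{..<N}-{i}. \<sigma> * w i j * A j)" for \<sigma>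
    unfolding R_def A_def by (simp add: inner_sum_right)
  have Rk: "inner u (R k \<sigma>) = (1/(real N - 1)) * (\<Sum>j\<in>{..<N}-{k}. \<sigma> * w k j * B j)" for \<sigma>
    unfolding R_def B_def by (simp add: inner_sum_right)
  have N1: "real N - 1 > 0" using N2 by simp
  have K0: "0 \<le> K" using wlo whi lo0 ik by (meson order_trans)
  have cardi: "card ({..<N}-{i}) = N - 1" using ik by simp
  have cardk: "card ({..<N}-{k}) = N - 1" using ik by simp
  have sumAB: "(\<Sum>j<N. B j) - (\<Sum>j<N. A j) = real N * n2"
    by (simp add: BA sum.distrib)
  show "inner (X i - X k) (R i 1 - R k 1) \<le> -lo * norm (X i - X k)^2"
  proof -
    have s1: "(\<Sum>j\<in>{..<N}-{i}. 1 * w i j * A j) \<le> (\<Sum>j\<in>{..<N}-{i}. lo * A j)"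
      by (rule sum_mono) (use wlo Ahi ik in \<open>auto intro!: mult_right_mono_neg\<close>)
    have s1': "(\<Sum>j\<in>{..<N}-{i}. lo * A j) = lo * (\<Sum>j<N. A j)"
      using ik by (simp add: sum_diff1 Ai sum_distrib_left)
    have s2: "(\<Sum>j\<in>{..<N}-{k}. lo * B j) \<le> (\<Sum>j\<in>{..<N}-{k}. 1 * w k j * B j)"
      by (rule sum_mono) (use wlo Blo ik in \<open>auto intro!: mult_right_mono\<close>)
    have s2': "(\<Sum>j\<in>{..<N}-{k}. lo * B j) = lo * (\<Sum>j<N. B j)"
      using ik by (simp add: sum_diff1 Bk sum_distrib_left)
    have "inner u (R i 1 - R k 1) = (1/(real N - 1)) * ((\<Sum>j\<in>{..<N}-{i}. 1 * w i j * A j) - (\<Sum>j\<in>{..<N}-{k}. 1 * w k j * B j))"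
      by (simp only: inner_diff_right Ri Rk right_diff_distrib)
    also have "\<dots> \<le> (1/(real N - 1)) * (lo * (\<Sum>j<N. A j) - lo * (\<Sum>j<N. B j))"
      using s1 s1' s2 s2' N1 by (intro mult_left_mono) auto
    also have "\<dots> = - (1/(real N - 1)) * lo * (real N * n2)"
      using sumAB by (simp add: algebra_simps)
    also have "\<dots> \<le> - lo * n2"
    proof -
      have "lo * n2 \<le> (1/(real N - 1)) * real N * (lo * n2)"
      proof -
        have "1 \<le> (1/(real N - 1)) * real N" using N1 by (simp add: field_simps)
        then show ?thesis using mult_right_mono[of 1 "(1/(real N - 1)) * real N" "lo * n2"] lo0 n20
          by simp
      qed
      then show ?thesis by (simp add: algebra_simps)
    qed
    finally show ?thesis unfolding u_def n2_def by simp
  qed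
  show "inner (X i - X k) (R i (-1) - R k (-1)) \<le> 2*K * norm (X i - X k)^2"
  proof -
    have s1: "(\<Sum>j\<in>{..<N}-{i}. -1 * w i j * A j) \<le> (\<Sum>j\<in>{..<N}-{i}. K * n2)"
    proof (rule sum_mono)
      fix j assume j: "j \<in> {..<N}-{i}"
      have "w i j * (- A j) \<le> K * n2"
        using j wlo whi lo0 K0 Alo[of j] Ahi[of j] ik n20 by (intro mult_mono) auto
      then show "-1 * w i j * A j \<le> K * n2" by simp
    qed
    have s2: "(\<Sum>j\<in>{..<N}-{k}. w k j * B j) \<le> (\<Sum>j\<in>{..<N}-{k}. K * n2)"
    proof (rule sum_mono)
      fix j assume j: "j \<in> {..<N}-{k}"
      show "w k j * B j \<le> K * n2"
        using j wlo whi lo0 K0 Blo[of j] Bhi[of j] ik n20 by (intro mult_mono) auto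
    qed
    have "inner u (R i (-1) - R k (-1)) = (1/(real N - 1)) * ((\<Sum>j\<in>{..<N}-{i}. -1 * w i j * A j) + (\<Sum>j\<in>{..<N}-{k}. w k j * B j))"
      by (simp add: inner_diff_right Ri Rk right_diff_distrib sum_negf)
    also have "\<dots> \<le> (1/(real N - 1)) * ((\<Sum>j\<in>{..<N}-{i}. K * n2) + (\<Sum>j\<in>{..<N}-{k}. K * n2))"
      using s1 s2 N1 by (intro mult_left_mono) auto
    also have "\<dots> = (1/(real N - 1)) * (2 * (real N - 1) * (K * n2))"
    proof -
      have rN: "real (N - 1) = real N - 1" using N2 by (simp add: of_nat_diff)
      have "(\<Sum>j\<in>{..<N}-{i}. K * n2) = (real N - 1) * (K * n2)" using cardi rN by simp
      moreover have "(\<Sum>j\<in>{..<N}-{k}. K * n2) = (real N - 1) * (K * n2)" using cardk rN by simp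
      ultimately show ?thesis by (simp only: ) (simp add: algebra_simps)
    qed
    also have "\<dots> = ((1/(real N - 1)) * (real N - 1)) * (2 * K * n2)" by (simp only: ac_simps)
    also have "(1/(real N - 1)) * (real N - 1) = 1" using N1 by simp
    finally show ?thesis unfolding u_def n2_def by simp
  qed
qed


lemma diam_set_eq:
  "{norm (x i s - x j s) | i j. i < N \<and> j < N} = (\<lambda>(i,j). norm (x i s - x j s)) ` ({..<N} \<times> {..<N})"
  by auto

lemma diam_ge:
  assumes "i < N" "j < N"
  shows "norm (x i s - x j s) \<le> diam_conf N x s"
  unfolding diam_conf_def diam_set_eq using assms by (intro Max_ge) auto

lemma diam_nonneg:
  assumes "N \<ge> 1"
  shows "0 \<le> diam_conf N x s"
  using order_trans[OF norm_ge_zero diam_ge[of 0 N 0 x s]] assms by simp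

lemma diam_attained:
  assumes "N \<ge> 1"
  shows "\<exists>i<N. \<exists>j<N. diam_conf N x s = norm (x i s - x j s)"
proof -
  have "diam_conf N x s \<in> (\<lambda>(i,j). norm (x i s - x j s)) ` ({..<N} \<times> {..<N})"
    unfolding diam_conf_def diam_set_eq using assms by (intro Max_in) (auto simp: lessThan_empty_iff)
  then show ?thesis by auto
qed

lemma diam_sq:
  assumes "N \<ge> 1"
  shows "Max ((\<lambda>q. inner (x (fst q) s - x (snd q) s) (x (fst q) s - x (snd q) s)) ` ({..<N} \<times> {..<N}))
          = (diam_conf N x s)^2"
proof (rule antisym)
  show "Max ((\<lambda>q. inner (x (fst q) s - x (snd q) s) (x (fst q) s - x (snd q) s)) ` ({..<N} \<times> {..<N}))
          \<le> (diam_conf N x s)^2"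
  proof (subst Max_le_iff)
    show "\<forall>a\<in>(\<lambda>q. inner (x (fst q) s - x (snd q) s) (x (fst q) s - x (snd q) s)) ` ({..<N} \<times> {..<N}).
        a \<le> (diam_conf N x s)\<^sup>2"
    proof
      fix y assume "y \<in> (\<lambda>q. inner (x (fst q) s - x (snd q) s) (x (fst q) s - x (snd q) s)) ` ({..<N} \<times> {..<N})"
      then obtain i j where ij: "i < N" "j < N" "y = inner (x i s - x j s) (x i s - x j s)" by auto
      have "norm (x i s - x j s) ^ 2 \<le> (diam_conf N x s)^2"
        using diam_ge[OF ij(1,2), of x s] by (intro power_mono) auto
      then show "y \<le> (diam_conf N x s)^2" using ij by (simp add: power2_norm_eq_inner)
    qed
  qed (use assms in \<open>auto simp: lessThan_empty_iff\<close>)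
  obtain i j where ij: "i < N" "j < N" "diam_conf N x s = norm (x i s - x j s)"
    using diam_attained[OF assms, of x s] by auto
  have "(diam_conf N x s)^2 = (\<lambda>q. inner (x (fst q) s - x (snd q) s) (x (fst q) s - x (snd q) s)) (i,j)"
    using ij by (simp add: power2_norm_eq_inner)
  also have "\<dots> \<le> Max ((\<lambda>q. inner (x (fst q) s - x (snd q) s) (x (fst q) s - x (snd q) s)) ` ({..<N} \<times> {..<N}))"
    using ij by (intro Max_ge) (auto intro: rev_image_eqI[of "(i,j)"])
  finally show "(diam_conf N x s)^2 \<le> Max ((\<lambda>q. inner (x (fst q) s - x (snd q) s) (x (fst q) s - x (snd q) s)) ` ({..<N} \<times> {..<N}))" .
qed

lemma diam_step:
  fixes x :: "nat \<Rightarrow> real \<Rightarrow> 'a::euclidean_space"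
  assumes N2: "N \<ge> 2" and s: "a \<le> s" "s \<le> b"
    and cont: "\<forall>i<N. continuous_on {a..b} (x i)"
    and der: "\<forall>i<N. \<forall>u\<in>{a<..<b}. (x i has_vector_derivative cons_rhs N t \<psi> x i u) (at u)"
    and sig: "\<forall>u\<in>{a<..<b}. switch_alpha t u = \<sigma>"
    and wb: "\<forall>u\<in>{a<..<b}. \<forall>i<N. \<forall>j<N. lo \<le> \<psi> (norm (x i u - x j u)) \<and> \<psi> (norm (x i u - x j u)) \<le> K"
    and lo0: "0 \<le> lo"
    and cc: "c = (if \<sigma> = 1 then -2*lo else 4*K)"
    and \<sigma>: "\<sigma> = 1 \<or> \<sigma> = -1"
  shows "(diam_conf N x s)^2 \<le> exp (c*(s-a)) * (diam_conf N x a)^2"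
proof -
  define P where "P = {..<N} \<times> {..<N}"
  define f where "f q u = inner (x (fst q) u - x (snd q) u) (x (fst q) u - x (snd q) u)" for q u
  define f' where "f' q u = 2 * inner (x (fst q) u - x (snd q) u) (cons_rhs N t \<psi> x (fst q) u - cons_rhs N t \<psi> x (snd q) u)" for q u
  have N1: "N \<ge> 1" using N2 by simp
  have Mf: "Max ((\<lambda>q. f q u) ` P) = (diam_conf N x u)^2" for u
    unfolding f_def P_def by (rule diam_sq[OF N1])
  have "Max ((\<lambda>q. f q s) ` P) \<le> exp (c*(s-a)) * Max ((\<lambda>q. f q a) ` P)"
  proof (rule maxgrowth[OF _ _ s])
    show "finite P" "P \<noteq> {}" unfolding P_def using N1 by (auto simp: lessThan_empty_iff)
    show "\<forall>p\<in>P. continuous_on {a..b} (f p)"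
      unfolding P_def f_def using cont by (auto intro!: continuous_intros)
    show "\<forall>p\<in>P. \<forall>u\<in>{a<..<b}. (f p has_real_derivative f' p u) (at u)"
      unfolding P_def f_def f'_def using der
      by (auto intro!: inner_self_deriv has_vector_derivative_diff)
    show "\<forall>u\<in>{a<..<b}. \<forall>p\<in>P. f p u = Max ((\<lambda>q. f q u) ` P) \<longrightarrow> f' p u \<le> c * f p u"
    proof (intro ballI impI)
      fix u p assume u: "u \<in> {a<..<b}" and p: "p \<in> P" and pm: "f p u = Max ((\<lambda>q. f q u) ` P)"
      obtain i k where pik: "p = (i,k)" by (cases p)
      have ik: "i < N" "k < N" using p pik P_def by auto
      have maxp: "\<forall>j<N. \<forall>l<N. norm (x j u - x l u) \<le> norm (x i u - x k u)"
      proof (intro allI impI)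
        fix j l assume jl: "j < N" "l < N"
        have "f (j,l) u \<le> Max ((\<lambda>q. f q u) ` P)" using jl unfolding P_def by (intro Max_ge) auto
        then have "norm (x j u - x l u)^2 \<le> norm (x i u - x k u)^2"
          using pm pik unfolding f_def by (simp add: power2_norm_eq_inner)
        then show "norm (x j u - x l u) \<le> norm (x i u - x k u)"
          by (rule power2_le_imp_le) simp
      qed
      define w where "w j l = \<psi> (norm (x j u - x l u))" for j l
      define R where "R i' \<sigma>' = (1/(real N - 1)) *\<^sub>R (\<Sum>j\<in>{..<N}-{i'}. (\<sigma>' * w i' j) *\<^sub>R (x j u - x i' u))" for i' \<sigma>'
      have Rc: "cons_rhs N t \<psi> x i' u = R i' \<sigma>" for i'
        unfolding cons_rhs_def R_def w_def using sig u by simp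
      have wlo: "\<forall>j<N. \<forall>l<N. lo \<le> w j l" and whi: "\<forall>j<N. \<forall>l<N. w j l \<le> K"
        using wb u unfolding w_def by auto
      note PI = pair_ineq[of N i k "\<lambda>j. x j u", OF N2 ik maxp wlo whi lo0 R_def]
      have fp: "f (i,k) u = norm (x i u - x k u)^2" unfolding f_def by (simp add: power2_norm_eq_inner)
      show "f' p u \<le> c * f p u"
      proof (cases "\<sigma> = 1")
        case True
        then show ?thesis unfolding pik f'_def fp using PI(1) cc by (simp add: Rc)
      next
        case False
        then have "\<sigma> = -1" using \<sigma> by simp
        then show ?thesis unfolding pik f'_def fp using PI(2) cc by (simp add: Rc)
      qed
    qed
  qed
  then show ?thesis unfolding Mf .
qed


lemma sq_to_lin:
  fixes X Y e :: real
  assumes "0 \<le> Y" "X^2 \<le> exp (2*e) * Y^2"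
  shows "X \<le> exp e * Y"
proof -
  have "exp (2*e) * Y^2 = (exp e * Y)^2" by (simp add: power_mult_distrib exp_double[symmetric] mult.commute)
  then have "X^2 \<le> (exp e * Y)^2" using assms by simp
  then show ?thesis by (rule power2_le_imp_le) (use assms in simp)
qed

lemma num1:
  fixes K \<tau> :: real
  assumes "0 \<le> \<tau>" "0 < K" "K * \<tau> < ln 2"
  shows "2*K*\<tau> \<le> ln (exp (K*\<tau>) / (2 - exp (K*\<tau>)))"
proof -
  define u where "u = exp (K*\<tau>)"
  have u1: "1 \<le> u" unfolding u_def using assms by simp
  have u2: "u < 2" unfolding u_def using assms exp_less_cancel_iff[of "K*\<tau>" "ln 2"] by simp
  have "u * u * (2 - u) \<le> u"
  proof -
    have e: "u*(2-u) = 1 - (u-1)^2" by (simp add: power2_eq_square algebra_simps)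
    have "u * (2 - u) \<le> 1" using e zero_le_power2[of "u-1"] by linarith
    then show ?thesis using u1 mult_left_mono[of "u*(2-u)" 1 u] by (simp add: mult.assoc)
  qed
  then have "u * u \<le> u / (2 - u)" using u2 by (simp add: field_simps)
  then have "ln (u*u) \<le> ln (u / (2 - u))" using u1 u2 by (subst ln_le_cancel_iff) auto
  moreover have "ln (u*u) = 2*K*\<tau>" unfolding u_def by (simp add: ln_mult)
  ultimately show ?thesis unfolding u_def by simp
qed

lemma num2:
  fixes K \<tau> \<psi>0 :: real
  assumes "0 \<le> \<tau>" "0 < K" "0 \<le> \<psi>0" "\<psi>0 \<le> K"
  shows "- \<psi>0 * \<tau> \<le> ln (max (1 - exp (- K * \<tau>)) (1 - (\<psi>0 / K) * (1 - exp (- K * \<tau>))))"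
proof -
  define r where "r = \<psi>0 / K"
  have r: "0 \<le> r" "r \<le> 1" unfolding r_def using assms by auto
  have "exp ((1 - r) *\<^sub>R 0 + r *\<^sub>R (- K * \<tau>)) \<le> (1 - r) * exp 0 + r * exp (- K * \<tau>)"
    by (rule convex_onD[OF exp_convex]) (use r in auto)
  moreover have "(1 - r) *\<^sub>R 0 + r *\<^sub>R (- K * \<tau>) = - \<psi>0 * \<tau>" unfolding r_def using assms by simp
  ultimately have "exp (- \<psi>0 * \<tau>) \<le> 1 - (\<psi>0 / K) * (1 - exp (- K * \<tau>))"
    unfolding r_def by (simp add: algebra_simps)
  also have "\<dots> \<le> max (1 - exp (- K * \<tau>)) (1 - (\<psi>0 / K) * (1 - exp (- K * \<tau>)))" by simp
  finally have le: "exp (- \<psi>0 * \<tau>) \<le> max (1 - exp (- K * \<tau>)) (1 - (\<psi>0 / K) * (1 - exp (- K * \<tau>)))" .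
  have pos: "0 < max (1 - exp (- K * \<tau>)) (1 - (\<psi>0 / K) * (1 - exp (- K * \<tau>)))"
    using less_le_trans[OF exp_gt_zero le] .
  have "ln (exp (- \<psi>0 * \<tau>)) \<le> ln (max (1 - exp (- K * \<tau>)) (1 - (\<psi>0 / K) * (1 - exp (- K * \<tau>))))"
    using le pos by (subst ln_le_cancel_iff) auto
  then show ?thesis by simp
qed

theorem theorem5p1:
  fixes N :: nat and \<psi> :: "real \<Rightarrow> real" and t :: "nat \<Rightarrow> real"
    and x :: "nat \<Rightarrow> real \<Rightarrow> 'a::euclidean_space"
  assumes N2: "N \<ge> 2"
    and psi_pos: "\<And>y. \<psi> y > 0"
    and psi_bdd: "bounded (range \<psi>)"
    and psi_cont: "continuous_on UNIV \<psi>"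
    and t_mono: "strict_mono t"
    and t0: "t 0 = 0"
    and t_lim: "filterlim t at_top sequentially"
    and gaps: "\<And>n. t (2*n+2) - t (2*n+1) < ln 2 / (SUP y. \<psi> y)"
    and sum1: "summable (\<lambda>p. ln (exp ((SUP y. \<psi> y) * (t (2*p+2) - t (2*p+1)))
                     / (2 - exp ((SUP y. \<psi> y) * (t (2*p+2) - t (2*p+1))))))"
    and sum2: "let K = (SUP y. \<psi> y);
                   M0 = exp (\<Sum>p. ln (exp (K * (t (2*p+2) - t (2*p+1)))
                                  / (2 - exp (K * (t (2*p+2) - t (2*p+1)))))) * diam_conf N x 0;
                   \<psi>0 = (INF y\<in>{-M0..M0}. \<psi> y)
               in filterlim (\<lambda>n. \<Sum>p<n. ln (max (1 - exp (- K * (t (2*p+1) - t (2*p))))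
                                      (1 - (\<psi>0 / K) * (1 - exp (- K * (t (2*p+1) - t (2*p)))))))
                    at_bot sequentially"
    and sol: "is_solution N t \<psi> x"
  shows "((\<lambda>s. diam_conf N x s) \<longlongrightarrow> 0) at_top"
proof -
  define K where "K = (SUP y. \<psi> y)"
  have bddA: "bdd_above (range \<psi>)" using psi_bdd by (rule bounded_imp_bdd_above)
  have psiK: "\<psi> y \<le> K" for y unfolding K_def by (rule cSUP_upper[OF _ bddA]) simp
  have K0: "0 < K" using psi_pos[of 0] psiK[of 0] by linarith
  note sum1' = sum1[folded K_def]
  note gaps' = gaps[folded K_def]
  note sum2' = sum2[folded K_def, unfolded Let_def]
  define D where "D s = diam_conf N x s" for s
  define \<tau>m where "\<tau>m p = t (2*p+2) - t (2*p+1)" for p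
  define \<tau>p where "\<tau>p p = t (2*p+1) - t (2*p)" for p
  define L1 where "L1 p = ln (exp (K * \<tau>m p) / (2 - exp (K * \<tau>m p)))" for p
  define S1 where "S1 = (\<Sum>p. L1 p)"
  define M0 where "M0 = exp S1 * D 0"
  define \<psi>0 where "\<psi>0 = (INF y\<in>{-M0..M0}. \<psi> y)"
  define L2 where "L2 p = ln (max (1 - exp (- K * \<tau>p p)) (1 - (\<psi>0 / K) * (1 - exp (- K * \<tau>p p))))" for p
  have sumL1: "summable L1" using sum1' unfolding L1_def \<tau>m_def .
  have sumL2: "filterlim (\<lambda>n. \<Sum>p<n. L2 p) at_bot sequentially"
    using sum2' unfolding L2_def \<tau>p_def \<psi>0_def M0_def S1_def L1_def \<tau>m_def D_def .

  have tmono: "t m \<le> t n" if "m \<le> n" for m n using t_mono that by (simp add: strict_mono_less_eq)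
  have tlt: "t m < t n" if "m < n" for m n using t_mono that by (simp add: strict_mono_less)
  have tnn: "0 \<le> t n" for n using tmono[of 0 n] t0 by simp
  have \<tau>m0: "0 \<le> \<tau>m p" for p unfolding \<tau>m_def using tmono[of "2*p+1" "2*p+2"] by simp
  have \<tau>p0: "0 \<le> \<tau>p p" for p unfolding \<tau>p_def using tmono[of "2*p" "2*p+1"] by simp
  have N1: "N \<ge> 1" using N2 by simp
  have Dnn: "0 \<le> D s" for s unfolding D_def by (rule diam_nonneg[OF N1])
  have Dge: "norm (x i s - x j s) \<le> D s" if "i < N" "j < N" for i j s
    unfolding D_def using that by (rule diam_ge)
  have M00: "0 \<le> M0" unfolding M0_def using Dnn[of 0] by simp
  have bddB: "bdd_below (\<psi> ` {-M0..M0})" by (rule bdd_belowI[of _ 0]) (use psi_pos less_imp_le in auto)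
  have psi0le: "\<psi>0 \<le> \<psi> y" if "y \<in> {-M0..M0}" for y unfolding \<psi>0_def by (rule cINF_lower[OF bddB that])
  have psi0nn: "0 \<le> \<psi>0" unfolding \<psi>0_def using M00 psi_pos by (intro cINF_greatest) (auto intro: less_imp_le)
  have psi0K: "\<psi>0 \<le> K" using psi0le[of 0] M00 psiK[of 0] by simp
  have Kgap: "K * \<tau>m p < ln 2" for p
  proof -
    have "\<tau>m p < ln 2 / K" using gaps'[of p] unfolding \<tau>m_def by simp
    then have "\<tau>m p * K < ln 2" using K0 by (simp add: pos_less_divide_eq)
    then show ?thesis by (simp only: mult.commute)
  qed
  have L1ge: "2*K*\<tau>m p \<le> L1 p" for p unfolding L1_def by (rule num1[OF \<tau>m0 K0 Kgap])
  have L1nn: "0 \<le> L1 p" for p using L1ge[of p] K0 \<tau>m0[of p] by (smt (verit) mult_nonneg_nonneg)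
  have L2ge: "- \<psi>0 * \<tau>p p \<le> L2 p" for p unfolding L2_def by (rule num2[OF \<tau>p0 K0 psi0nn psi0K])
  have sumL1le: "(\<Sum>p<m. L1 p) \<le> S1" for m unfolding S1_def
    by (rule sum_le_suminf[OF sumL1]) (auto intro: L1nn)
  have xcont: "continuous_on {t n..t (Suc n)} (x i)" if "i < N" for i n
  proof -
    have "continuous_on {0..} (x i)" using sol that unfolding is_solution_def by auto
    then show ?thesis by (rule continuous_on_subset) (use tnn in auto)
  qed
  have xder: "\<forall>i<N. \<forall>u\<in>{t n<..<t (Suc n)}. (x i has_vector_derivative cons_rhs N t \<psi> x i u) (at u)" for n
    using sol unfolding is_solution_def by simp
  have xcont': "\<forall>i<N. continuous_on {t n..t (Suc n)} (x i)" for n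
    using xcont by simp
  have alpha_pos: "switch_alpha t u = 1" if "u \<in> {t (2*m)<..<t (Suc (2*m))}" for u m
  proof -
    have u0: "u \<noteq> 0" using that tnn[of "2*m"] by auto
    have "\<not> (t (2*n+1) \<le> u \<and> u \<le> t (2*n+2))" for n
    proof (cases "m \<le> n")
      case True
      then have "t (Suc (2*m)) \<le> t (2*n+1)" by (intro tmono) simp
      then show ?thesis using that by auto
    next
      case False
      then have "t (2*n+2) \<le> t (2*m)" by (intro tmono) simp
      then show ?thesis using that by auto
    qed
    then show ?thesis unfolding switch_alpha_def using u0 by auto
  qed
  have alpha_neg: "switch_alpha t u = -1" if "u \<in> {t (Suc (2*m))<..<t (Suc (Suc (2*m)))}" for u m
  proof -
    have u0: "u \<noteq> 0" using that tnn[of "Suc (2*m)"] by auto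
    have "t (2*m+1) \<le> u \<and> u \<le> t (2*m+2)" using that by auto
    then show ?thesis unfolding switch_alpha_def using u0 by auto
  qed
  have pos0: "D s \<le> D (t (2*m))" if "t (2*m) \<le> s" "s \<le> t (Suc (2*m))" for s m
  proof -
    have "(D s)^2 \<le> exp (0 * (s - t (2*m))) * (D (t (2*m)))^2"
    proof -
      let ?I = "{t (2*m)<..<t (Suc (2*m))}"
      note c1 = xcont'[of "2*m"]
      note d1 = xder[of "2*m"]
      have s1: "\<forall>u\<in>?I. switch_alpha t u = 1" using alpha_pos[of _ m] by simp
      have w1: "\<forall>u\<in>?I. \<forall>i<N. \<forall>j<N. 0 \<le> \<psi> (norm (x i u - x j u)) \<and> \<psi> (norm (x i u - x j u)) \<le> K"
        by (simp add: less_imp_le psi_pos psiK)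
      show ?thesis unfolding D_def by (rule diam_step[OF N2 that c1 d1 s1 w1 order_refl]) simp_all
    qed
    then have "(D s)^2 \<le> exp (2*0) * (D (t (2*m)))^2" by simp
    from sq_to_lin[OF Dnn this] show ?thesis by simp
  qed
  have neg: "D s \<le> exp (2*K*(s - t (Suc (2*m)))) * D (t (Suc (2*m)))"
    if "t (Suc (2*m)) \<le> s" "s \<le> t (Suc (Suc (2*m)))" for s m
  proof -
    have "(D s)^2 \<le> exp ((4*K) * (s - t (Suc (2*m)))) * (D (t (Suc (2*m))))^2"
    proof -
      let ?I = "{t (Suc (2*m))<..<t (Suc (Suc (2*m)))}"
      note c1 = xcont'[of "Suc (2*m)"]
      note d1 = xder[of "Suc (2*m)"]
      have s1: "\<forall>u\<in>?I. switch_alpha t u = -1" using alpha_neg[of _ m] by simp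
      have w1: "\<forall>u\<in>?I. \<forall>i<N. \<forall>j<N. 0 \<le> \<psi> (norm (x i u - x j u)) \<and> \<psi> (norm (x i u - x j u)) \<le> K"
        by (simp add: less_imp_le psi_pos psiK)
      show ?thesis unfolding D_def by (rule diam_step[OF N2 that c1 d1 s1 w1 order_refl]) simp_all
    qed
    moreover have "(4*K) * (s - t (Suc (2*m))) = 2 * (2*K*(s - t (Suc (2*m))))" by simp
    ultimately have "(D s)^2 \<le> exp (2 * (2*K*(s - t (Suc (2*m))))) * (D (t (Suc (2*m))))^2" by simp
    from sq_to_lin[OF Dnn this] show ?thesis .
  qed
  have pos1: "D (t (Suc (2*m))) \<le> exp (- \<psi>0 * \<tau>p m) * D (t (2*m))"
    if bnd: "\<forall>u\<in>{t (2*m)<..<t (Suc (2*m))}. D u \<le> M0" for m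
  proof -
    have wb: "\<forall>u\<in>{t (2*m)<..<t (Suc (2*m))}. \<forall>i<N. \<forall>j<N. \<psi>0 \<le> \<psi> (norm (x i u - x j u)) \<and> \<psi> (norm (x i u - x j u)) \<le> K"
    proof (intro ballI allI impI conjI)
      fix u i j assume u: "u \<in> {t (2*m)<..<t (Suc (2*m))}" and ij: "i < N" "j < N"
      have "D u \<le> M0" using bnd u by blast
      then have "norm (x i u - x j u) \<le> M0" using Dge[OF ij, of u] by linarith
      moreover have "- M0 \<le> norm (x i u - x j u)" using M00 by (smt (verit) norm_ge_zero)
      ultimately show "\<psi>0 \<le> \<psi> (norm (x i u - x j u))" by (intro psi0le) auto
      show "\<psi> (norm (x i u - x j u)) \<le> K" by (rule psiK)
    qed
    have "(D (t (Suc (2*m))))^2 \<le> exp ((-2*\<psi>0) * (t (Suc (2*m)) - t (2*m))) * (D (t (2*m)))^2"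
    proof -
      let ?I = "{t (2*m)<..<t (Suc (2*m))}"
      note c1 = xcont'[of "2*m"]
      note d1 = xder[of "2*m"]
      have s1: "\<forall>u\<in>?I. switch_alpha t u = 1" using alpha_pos[of _ m] by simp
      have le: "t (2*m) \<le> t (Suc (2*m))" by (rule tmono) simp
      show ?thesis unfolding D_def by (rule diam_step[OF N2 le order_refl c1 d1 s1 wb psi0nn]) simp_all
    qed
    note h = this
    have eq: "(-2*\<psi>0) * (t (Suc (2*m)) - t (2*m)) = 2 * (- \<psi>0 * \<tau>p m)" unfolding \<tau>p_def by simp
    from sq_to_lin[OF Dnn h[unfolded eq]] show ?thesis .
  qed
  define B where "B m = exp (\<Sum>p<m. 2*K*\<tau>m p - \<psi>0*\<tau>p p) * D 0" for m
  have Bnn: "0 \<le> B m" for m unfolding B_def using Dnn by simp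
  have sumle1: "(\<Sum>p<m. 2*K*\<tau>m p - \<psi>0*\<tau>p p) \<le> S1" for m
  proof -
    have "(\<Sum>p<m. 2*K*\<tau>m p - \<psi>0*\<tau>p p) \<le> (\<Sum>p<m. L1 p)"
    proof (rule sum_mono)
      fix p show "2*K*\<tau>m p - \<psi>0*\<tau>p p \<le> L1 p"
        using L1ge[of p] mult_nonneg_nonneg[OF psi0nn \<tau>p0[of p]] by linarith
    qed
    then show ?thesis using sumL1le[of m] by linarith
  qed
  have BM0: "B m \<le> M0" for m
    unfolding B_def M0_def using sumle1[of m] Dnn[of 0] by (intro mult_right_mono) auto
  have sumle2: "(\<Sum>p<m. 2*K*\<tau>m p - \<psi>0*\<tau>p p) \<le> S1 + (\<Sum>p<m. L2 p)" for m
  proof -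
    have "(\<Sum>p<m. 2*K*\<tau>m p - \<psi>0*\<tau>p p) = (\<Sum>p<m. 2*K*\<tau>m p) + (\<Sum>p<m. - \<psi>0*\<tau>p p)"
      by (simp add: sum.distrib[symmetric])
    also have "(\<Sum>p<m. 2*K*\<tau>m p) \<le> (\<Sum>p<m. L1 p)" by (rule sum_mono) (rule L1ge)
    also have "(\<Sum>p<m. - \<psi>0*\<tau>p p) \<le> (\<Sum>p<m. L2 p)" by (rule sum_mono) (rule L2ge)
    finally show ?thesis using sumL1le[of m] by linarith
  qed
  have BSuc: "B (Suc m) = exp (2*K*\<tau>m m) * (exp (- \<psi>0*\<tau>p m) * B m)" for m
  proof -
    define S where "S = (\<Sum>p<m. 2*K*\<tau>m p - \<psi>0*\<tau>p p)"
    have "(\<Sum>p<Suc m. 2*K*\<tau>m p - \<psi>0*\<tau>p p) = 2*K*\<tau>m m + (- \<psi>0*\<tau>p m + S)"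
      unfolding S_def by simp
    then have "exp (\<Sum>p<Suc m. 2*K*\<tau>m p - \<psi>0*\<tau>p p) = exp (2*K*\<tau>m m) * (exp (- \<psi>0*\<tau>p m) * exp S)"
      by (simp only: exp_add)
    then show ?thesis unfolding B_def S_def by (simp only: mult.assoc)
  qed
  have t2: "t (2*m+2) = t (Suc (Suc (2*m)))" "t (2*m+1) = t (Suc (2*m))" for m by simp_all
  have exp4: "exp (2*K*(s - t (Suc (2*m)))) \<le> 4" if "s \<le> t (Suc (Suc (2*m)))" for s m
  proof -
    have "K * (s - t (Suc (2*m))) \<le> K * \<tau>m m" unfolding \<tau>m_def t2 using that K0 by simp
    then have "K * (s - t (Suc (2*m))) < ln 2" using Kgap[of m] by linarith
    then have a: "exp (K * (s - t (Suc (2*m)))) < 2" using exp_less_cancel_iff[of _ "ln 2"] by fastforce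
    have "exp (2*K*(s - t (Suc (2*m)))) = exp (K * (s - t (Suc (2*m)))) * exp (K * (s - t (Suc (2*m))))"
      by (simp add: exp_add[symmetric])
    also have "\<dots> \<le> 2 * 2" using a by (intro mult_mono) auto
    finally show ?thesis by simp
  qed
  have indB: "D (t (2*m)) \<le> B m" for m
  proof (induction m)
    case 0
    then show ?case unfolding B_def using t0 by simp
  next
    case (Suc m)
    have bnd: "\<forall>u\<in>{t (2*m)<..<t (Suc (2*m))}. D u \<le> M0"
      using pos0 Suc BM0[of m] by (meson greaterThanLessThan_iff less_imp_le order_trans)
    have le1: "t (Suc (2*m)) \<le> t (Suc (Suc (2*m)))" by (rule tmono) simp
    have "D (t (2 * Suc m)) = D (t (Suc (Suc (2*m))))" by simp
    also have "\<dots> \<le> exp (2*K*(t (Suc (Suc (2*m))) - t (Suc (2*m)))) * D (t (Suc (2*m)))"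
      by (rule neg[OF le1 order_refl])
    also have "\<dots> = exp (2*K*\<tau>m m) * D (t (Suc (2*m)))" unfolding \<tau>m_def t2 by simp
    also have "\<dots> \<le> exp (2*K*\<tau>m m) * (exp (- \<psi>0 * \<tau>p m) * D (t (2*m)))"
      by (rule mult_left_mono[OF pos1[OF bnd]]) simp
    also have "\<dots> \<le> exp (2*K*\<tau>m m) * (exp (- \<psi>0 * \<tau>p m) * B m)"
      using Suc by (intro mult_left_mono) auto
    finally show ?case unfolding BSuc .
  qed
  have locate: "\<exists>m. t (2*m) \<le> s \<and> s < t (Suc (Suc (2*m)))" if "0 \<le> s" for s
  proof -
    have "eventually (\<lambda>n. s + 1 \<le> t n) sequentially" using t_lim by (simp add: filterlim_at_top)
    then obtain n0 where "s + 1 \<le> t n0" by (auto simp: eventually_sequentially)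
    then have ex: "\<exists>n. s < t n" by (intro exI[of _ n0]) simp
    define n1 where "n1 = (LEAST n. s < t n)"
    have n1: "s < t n1" unfolding n1_def using ex by (rule LeastI_ex)
    have "n1 \<noteq> 0"
    proof
      assume "n1 = 0" then show False using n1 t0 that by simp
    qed
    then obtain n where nn: "n1 = Suc n" by (cases n1) auto
    have "\<not> s < t n" using not_less_Least[of n "\<lambda>n. s < t n"] nn unfolding n1_def by simp
    then have tn: "t n \<le> s" by simp
    show ?thesis
    proof (cases "even n")
      case True
      then obtain m where nm: "n = 2*m" by (rule evenE)
      have "t (Suc (2*m)) \<le> t (Suc (Suc (2*m)))" by (rule tmono) simp
      moreover have "t (2*m) \<le> s" using tn nm by simp
      moreover have "s < t (Suc (2*m))" using n1 nn nm by simp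
      ultimately show ?thesis by (intro exI[of _ m]) simp
    next
      case False
      then obtain m where nm0: "n = 2*m+1" by (rule oddE)
      then have nm: "n = Suc (2*m)" by simp
      have "t (2*m) \<le> t (Suc (2*m))" by (rule tmono) simp
      moreover have "t (Suc (2*m)) \<le> s" using tn nm by simp
      moreover have "s < t (Suc (Suc (2*m)))" using n1 nn nm by simp
      ultimately show ?thesis by (intro exI[of _ m]) simp
    qed
  qed
  have Dbound: "D s \<le> 4 * B m" if "t (2*m) \<le> s" "s < t (Suc (Suc (2*m)))" for s m
  proof (cases "s \<le> t (Suc (2*m))")
    case True
    then have "D s \<le> D (t (2*m))" using pos0 that by simp
    then show ?thesis using indB[of m] Bnn[of m] by linarith
  next
    case False
    have D1: "D (t (Suc (2*m))) \<le> B m"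
      using pos0[of m "t (Suc (2*m))"] indB[of m] tmono[of "2*m" "Suc (2*m)"] by simp
    have "D s \<le> exp (2*K*(s - t (Suc (2*m)))) * D (t (Suc (2*m)))"
      using neg[of m s] False that by simp
    also have "\<dots> \<le> 4 * B m" using exp4[of s m] that D1 Dnn Bnn
      by (intro mult_mono) auto
    finally show ?thesis .
  qed
  have Bsmall: "\<exists>m0. \<forall>m\<ge>m0. 4 * B m < e" if e: "e > 0" for e
  proof -
    define Z where "Z = ln (e / (4 * (D 0 + 1))) - S1"
    have "eventually (\<lambda>n. (\<Sum>p<n. L2 p) \<le> Z) sequentially"
      using sumL2 by (simp add: filterlim_at_bot)
    then obtain m0 where m0: "\<And>m. m \<ge> m0 \<Longrightarrow> (\<Sum>p<m. L2 p) \<le> Z" by (auto simp: eventually_sequentially)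
    have D01: "0 < D 0 + 1" using Dnn[of 0] by simp
    show ?thesis
    proof (intro exI[of _ m0] allI impI)
      fix m assume "m \<ge> m0"
      then have "(\<Sum>p<m. 2*K*\<tau>m p - \<psi>0*\<tau>p p) \<le> ln (e / (4 * (D 0 + 1)))"
        using sumle2[of m] m0[of m] unfolding Z_def by linarith
      then have "exp (\<Sum>p<m. 2*K*\<tau>m p - \<psi>0*\<tau>p p) \<le> e / (4 * (D 0 + 1))"
        using e D01 by (metis exp_le_cancel_iff exp_ln divide_pos_pos mult_pos_pos zero_less_numeral)
      then have "B m \<le> e / (4 * (D 0 + 1)) * D 0" unfolding B_def using Dnn[of 0] by (rule mult_right_mono)
      also have "\<dots> < e / 4" using e D01 Dnn[of 0] by (simp add: field_simps)
      finally show "4 * B m < e" by simp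
    qed
  qed
  show ?thesis
  proof (rule order_tendstoI)
    fix a :: real assume "a < 0"
    show "eventually (\<lambda>s. a < diam_conf N x s) at_top"
    proof (rule always_eventually, rule allI)
      fix s show "a < diam_conf N x s" using Dnn[of s] \<open>a < 0\<close> unfolding D_def by linarith
    qed
  next
    fix a :: real assume "0 < a"
    then obtain m0 where m0: "\<And>m. m \<ge> m0 \<Longrightarrow> 4 * B m < a" using Bsmall by blast
    show "eventually (\<lambda>s. diam_conf N x s < a) at_top"
      unfolding eventually_at_top_linorder
    proof (intro exI[of _ "t (2*m0)"] allI impI)
      fix s assume s: "t (2*m0) \<le> s"
      then have "0 \<le> s" using tnn[of "2*m0"] by linarith
      then obtain m where m: "t (2*m) \<le> s" "s < t (Suc (Suc (2*m)))" using locate by blast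
      have "m0 \<le> m"
      proof (rule ccontr)
        assume "\<not> m0 \<le> m"
        then have "Suc (Suc (2*m)) \<le> 2*m0" by simp
        then have "t (Suc (Suc (2*m))) \<le> t (2*m0)" by (rule tmono)
        then show False using m s by simp
      qed
      then show "diam_conf N x s < a" using Dbound[OF m] m0[of m] unfolding D_def by simp
    qed
  qed
qed

end
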